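(* Let $n$ be a positive integer, and consider the one-way communication problem "evaluate $f$ with domain $[n]$ on $0$". Let $\mathcal{P}$ be any protocol for this problem in which Bob always outputs the correct answer. Then there is some input on which Alice's message in $\mathcal{P}$ contains at least $n\log_2 n$ bits.
   Context: Notation: $[n]=\{0,\dots,n-1\}$. The communication problem "evaluate $f$ with domain $[n]$ on $0$" is set up as follows. Let $k_0,\dots,k_{n-1}$ be any permutation of $[n]$, and let $v_0,\dots,v_{n-1}$ be any sequence of elements of $[n]$. These two sequences represent the function $f$ with $f(k_i)=v_i$. - Alice knows $v_0,\dots,v_{n-1}$, and Bob knows $k_0,\dots,k_{n-1}$. - Alice sends a single message to Bob, which may depend only on her input. - Bob, using the message and his own input, must output the $v_j$ such that $k_j=0$. *)

theory Defs
  imports Complex_Main "HOL-Library.Sublist"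
begin

definition alice_inputs :: "nat \<Rightarrow> nat list set" where
  "alice_inputs n = {v. length v = n \<and> set v \<subseteq> {..<n}}"

definition bob_inputs :: "nat \<Rightarrow> nat list set" where
  "bob_inputs n = {k. length k = n \<and> distinct k \<and> set k = {..<n}}"

text \<open>A one-way protocol is a pair (msg, out): Alice sends the bit string msg v,
  Bob outputs out m k. It is correct if Bob always outputs v_j where k_j = 0.\<close>
definition eval_at_zero_correct ::
  "nat \<Rightarrow> (nat list \<Rightarrow> bool list) \<Rightarrow> (bool list \<Rightarrow> nat list \<Rightarrow> nat) \<Rightarrow> bool" where
  "eval_at_zero_correct n msg out \<longleftrightarrow>
     (\<forall>v\<in>alice_inputs n. \<forall>k\<in>bob_inputs n. \<forall>j<n. k ! j = 0 \<longrightarrow> out (msg v) k = v ! j)"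

text \<open>Messages are self-delimiting: no message is a proper prefix of another.\<close>
definition prefix_free_messages ::
  "nat \<Rightarrow> (nat list \<Rightarrow> bool list) \<Rightarrow> bool" where
  "prefix_free_messages n msg \<longleftrightarrow>
     (\<forall>v\<in>alice_inputs n. \<forall>w\<in>alice_inputs n. prefix (msg v) (msg w) \<longrightarrow> msg v = msg w)"

end

theory Submission
  imports Defs
begin

lemma perm_exists:
  assumes "i < n"
  shows "\<exists>k\<in>bob_inputs n. k ! i = 0"
proof -
  define g where "g = (\<lambda>j::nat. if j = i then 0 else if j = 0 then i else j)"
  define k where "k = map g [0..<n]"
  have inj: "inj_on g {0..<n}" unfolding g_def inj_on_def by auto
  have "distinct k" unfolding k_def using inj by (simp add: distinct_map)
  moreover have "set k = {..<n}"
  proof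
    show "set k \<subseteq> {..<n}" unfolding k_def g_def using assms by auto
  next
    show "{..<n} \<subseteq> set k"
    proof
      fix x assume x: "x \<in> {..<n}"
      have "g (g x) = x" unfolding g_def by auto
      moreover have "g x < n" using x assms unfolding g_def by auto
      ultimately show "x \<in> set k" unfolding k_def by (metis atLeastLessThan_iff image_eqI le0 set_map set_upt)
    qed
  qed
  moreover have "k ! i = 0" unfolding k_def g_def using assms by simp
  moreover have "length k = n" unfolding k_def by simp
  ultimately show ?thesis unfolding bob_inputs_def by blast
qed

lemma msg_inj:
  assumes "eval_at_zero_correct n msg out"
  shows "inj_on msg (alice_inputs n)"
proof (rule inj_onI)
  fix v w assume v: "v \<in> alice_inputs n" and w: "w \<in> alice_inputs n" and eq: "msg v = msg w"
  show "v = w"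
  proof (rule nth_equalityI)
    show "length v = length w" using v w by (simp add: alice_inputs_def)
  next
    fix i assume "i < length v"
    then have i: "i < n" using v by (simp add: alice_inputs_def)
    obtain k where k: "k \<in> bob_inputs n" "k ! i = 0" using perm_exists[OF i] by blast
    have "out (msg v) k = v ! i" "out (msg w) k = w ! i"
      using assms v w k i unfolding eval_at_zero_correct_def by blast+
    then show "v ! i = w ! i" using eq by simp
  qed
qed

theorem lemma1:
  fixes n :: nat
    and msg :: "nat list \<Rightarrow> bool list"
    and out :: "bool list \<Rightarrow> nat list \<Rightarrow> nat"
  assumes "n \<ge> 1"
    and "prefix_free_messages n msg"
    and "eval_at_zero_correct n msg out"
  shows "\<exists>v\<in>alice_inputs n. real (length (msg v)) \<ge> real n * log 2 (real n)"
proof (rule ccontr)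
  assume "\<not> ?thesis"
  then have lt: "\<forall>v\<in>alice_inputs n. real (length (msg v)) < real n * log 2 (real n)" by auto
  let ?A = "alice_inputs n"
  have Aeq: "?A = {xs. set xs \<subseteq> {..<n} \<and> length xs = n}" unfolding alice_inputs_def by auto
  have finA: "finite ?A" unfolding Aeq by (rule finite_lists_length_eq) simp
  have cardA: "card ?A = n ^ n" unfolding Aeq by (simp add: card_lists_length_eq)
  have neA: "?A \<noteq> {}" using cardA assms(1) by auto
  define m where "m = Max ((\<lambda>v. length (msg v)) ` ?A)"
  have mle: "length (msg v) \<le> m" if "v \<in> ?A" for v unfolding m_def using finA that by auto
  obtain v0 where v0: "v0 \<in> ?A" "m = length (msg v0)"
    unfolding m_def using finA neA by (metis (no_types, lifting) Max_in finite_imageI image_iff image_is_empty)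
  have mlt: "real m < real n * log 2 (real n)" using lt v0 by auto
  define pad where "pad = (\<lambda>v. msg v @ replicate (m - length (msg v)) False)"
  let ?B = "{xs. set xs \<subseteq> (UNIV::bool set) \<and> length xs = m}"
  have "inj_on pad ?A"
  proof (rule inj_onI)
    fix v w assume v: "v \<in> ?A" and w: "w \<in> ?A" and eq: "pad v = pad w"
    have "prefix (msg v) (msg w) \<or> prefix (msg w) (msg v)"
      using eq unfolding pad_def by (metis prefix_def prefix_same_cases)
    then have "msg v = msg w" using assms(2) v w unfolding prefix_free_messages_def by metis
    then show "v = w" using msg_inj[OF assms(3)] v w by (meson inj_onD)
  qed
  moreover have "pad ` ?A \<subseteq> ?B" using mle unfolding pad_def by auto
  ultimately have "card ?A \<le> card ?B"
    using card_inj_on_le finite_lists_length_eq[of "UNIV::bool set" m] by auto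
  moreover have "card ?B = 2 ^ m" using card_lists_length_eq[of "UNIV::bool set" m] by simp
  ultimately have le: "n ^ n \<le> 2 ^ m" using cardA by simp
  have "real n * log 2 (real n) = log 2 (real (n ^ n))" using assms(1)
    by (simp add: log_nat_power)
  also have "\<dots> \<le> log 2 (2 ^ m)" using le assms(1)
  proof -
    have "real (n ^ n) \<le> real (2 ^ m)" using le by (simp only: of_nat_le_iff)
    then have "real (n ^ n) \<le> 2 ^ m" by simp
    moreover have "real (n ^ n) > 0" using assms(1) by simp
    ultimately show ?thesis using log_le_cancel_iff[of 2 "real (n ^ n)" "2 ^ m"] by simp
  qed
  also have "\<dots> = real m" by simp
  finally show False using mlt by simp
qed

end
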